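(* Let $\beta_{2k}:=B_{2k}/(2k)!$. For every even integer $N\ge4$ and every integer $i$ with $0\le i\le N/2-1$, $$\sum_{k=0}^{N/2-1-\lfloor i/2\rfloor}\beta_{2k}\beta_{N-2k}\binom{N-2k}{i}+\sum_{l=0}^{\lfloor i/2\rfloor}\beta_{2l}\beta_{N-2l}\binom{N-2l}{i-2l+1}=0.$$
   Context: Bernoulli numbers are defined by $\frac{z}{e^z-1}=\sum_{m\ge0}\frac{B_m}{m!}z^m$; equivalently $\frac x2\coth\frac x2=\sum_{J\ge0}\beta_{2J}x^{2J}$. Convention: $\binom ab=0$ if $b<0$ or $b>a$. *)

theory Defs
  imports Complex_Main
begin

text \<open>Bernoulli numbers with the convention z/(e^z - 1) = sum B_m z^m/m!, i.e. B_1 = -1/2,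
  characterised by the standard recurrence sum_{k<=n} (n+1 choose k) B_k = 0 for n >= 1.\<close>
fun bernoulli :: "nat \<Rightarrow> real" where
  "bernoulli n = (if n = 0 then 1
     else - (\<Sum>k<n. of_nat ((n+1) choose k) * bernoulli k) / of_nat (n+1))"

declare bernoulli.simps[simp del]

definition beta :: "nat \<Rightarrow> real" where
  "beta m = bernoulli m / fact m"

end

theory Submission imports Defs "HOL-Computational_Algebra.Formal_Power_Series" "HOL-Computational_Algebra.Polynomial"
begin

definition bgf :: "real fps" where "bgf = Abs_fps (\<lambda>n. bernoulli n / fact n)"
definition Egf :: "real fps" where "Egf = bgf + fps_const (1/2) * fps_X"
definition emb :: "real poly \<Rightarrow> real fps \<Rightarrow> real poly fps" where
  "emb a A = Abs_fps (\<lambda>n. smult (fps_nth A n) (a^n))"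

lemma emb_nth[simp]: "fps_nth (emb a A) n = smult (fps_nth A n) (a^n)" by (simp add: emb_def)

lemma smult_sum_right: "smult c (sum f S) = sum (\<lambda>i. smult c (f i)) S"
  by (induct S rule: infinite_finite_induct) (auto simp: smult_add_right)

lemma emb_mult: "emb a (A*B) = emb a A * emb a B"
proof (rule fps_ext)
  fix n
  have "fps_nth (emb a A * emb a B) n = (\<Sum>i=0..n. smult (fps_nth A i * fps_nth B (n-i)) (a^n))"
    unfolding fps_mult_nth emb_nth
    by (intro sum.cong refl) (simp add: power_add[symmetric] mult_ac)
  also have "\<dots> = smult (fps_nth (A*B) n) (a^n)" unfolding fps_mult_nth smult_sum by (rule sum.cong) (simp_all add: mult.commute)
  finally show "fps_nth (emb a (A*B)) n = fps_nth (emb a A * emb a B) n" by simp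
qed

lemma emb_add: "emb a (A+B) = emb a A + emb a B"
  by (rule fps_ext) (simp add: smult_add_left)
lemma emb_diff: "emb a (A-B) = emb a A - emb a B"
  by (rule fps_ext) (simp add: smult_diff_left)
lemma emb_one: "emb a 1 = 1"
  by (rule fps_ext) (simp add: fps_one_nth)
lemma emb_const: "emb a (fps_const c) = fps_const [:c:]"
  by (rule fps_ext) auto
lemma emb_X: "emb a fps_X = fps_const a * fps_X"
  by (rule fps_ext) (simp add: fps_X_def)

lemma emb_exp_add: "emb (a+b) (fps_exp 1) = emb a (fps_exp 1) * emb b (fps_exp 1)"
proof (rule fps_ext)
  fix n
  have "fps_nth (emb a (fps_exp 1) * emb b (fps_exp 1)) n
      = (\<Sum>k=0..n. smult (1 / fact n * of_nat (n choose k)) (a^k * b^(n-k)))"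
    unfolding fps_mult_nth emb_nth fps_exp_nth
    apply (intro sum.cong refl)
    apply (simp add: binomial_fact field_simps)
    done
  also have "\<dots> = smult (1 / fact n) (\<Sum>k=0..n. smult (of_nat (n choose k)) (a^k * b^(n-k)))"
    by (simp add: smult_sum_right smult_smult)
  also have "\<dots> = smult (1 / fact n) ((a+b)^n)"
    by (simp add: binomial_ring atLeast0AtMost of_nat_poly mult.assoc)
  finally show "fps_nth (emb (a+b) (fps_exp 1)) n = fps_nth (emb a (fps_exp 1) * emb b (fps_exp 1)) n" by simp
qed

lemma bern_rec:
  assumes "n \<ge> 2"
  shows "(\<Sum>k<n. real (n choose k) * bernoulli k) = 0"
proof -
  obtain m where m: "n = Suc m" "m \<ge> 1" using assms by (cases n) auto
  have b: "bernoulli m = - (\<Sum>k<m. real ((m+1) choose k) * bernoulli k) / real (m+1)"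
    using m(2) by (subst bernoulli.simps) simp
  have "(\<Sum>k<n. real (n choose k) * bernoulli k)
     = (\<Sum>k<m. real ((m+1) choose k) * bernoulli k) + real (m+1) * bernoulli m"
    using m(1) by simp
  also have "\<dots> = 0" using b by (simp add: field_simps)
  finally show ?thesis .
qed

lemma B1: "bgf * (fps_exp 1 - 1) = fps_X"
proof (rule fps_ext)
  fix n
  show "fps_nth (bgf * (fps_exp 1 - 1)) n = fps_nth fps_X n"
  proof (cases n)
    case 0 then show ?thesis by (simp add: fps_mult_nth)
  next
    case (Suc m)
    have "fps_nth (bgf * (fps_exp 1 - 1)) n = (\<Sum>i=0..m. bernoulli i / fact i / fact (n - i))"
      unfolding fps_mult_nth Suc sum.atLeast0_atMost_Suc
      by (auto simp: bgf_def fps_one_nth intro!: sum.cong)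
    also have "\<dots> = (\<Sum>i<n. real (n choose i) * bernoulli i) / fact n"
    proof -
      have "{..<n} = {0..m}" using Suc by auto
      moreover have "real (n choose i) * bernoulli i / fact n = bernoulli i / fact i / fact (n - i)"
        if "i \<in> {0..m}" for i
      proof -
        have "i \<le> n" using that Suc by auto
        then have "real (n choose i) = fact n / (fact i * fact (n-i))" by (simp add: binomial_fact)
        then show ?thesis by (simp add: field_simps)
      qed
      ultimately show ?thesis unfolding sum_divide_distrib by simp
    qed
    also have "\<dots> = fps_nth fps_X n"
    proof (cases "m = 0")
      case True then show ?thesis using Suc by (simp add: bernoulli.simps)
    next
      case False then show ?thesis using Suc bern_rec[of n] by simp
    qed
    finally show ?thesis .
  qed
qed

lemma two_half: "(2::real fps) * fps_const (1/2) = 1"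
  by (metis fps_const_mult fps_const_1_eq_1 numeral_fps_const field_sum_of_halves mult_2 divide_self_if one_add_one zero_neq_numeral mult.commute nonzero_mult_div_cancel_left)

lemma E1: "2 * (Egf * (fps_exp 1 - 1)) = fps_X * (fps_exp 1 + 1)"
proof -
  have "Egf * (fps_exp 1 - 1) = fps_X + fps_const (1/2) * fps_X * (fps_exp 1 - 1)"
    unfolding Egf_def distrib_right B1 by simp
  then have "2 * (Egf * (fps_exp 1 - 1)) = 2 * fps_X + (2 * fps_const (1/2)) * fps_X * (fps_exp 1 - 1)"
    by algebra
  also have "\<dots> = fps_X * (fps_exp 1 + 1)" unfolding two_half by algebra
  finally show ?thesis .
qed

lemma emb_two: "emb a 2 = 2"
  by (simp only: one_add_one[symmetric] emb_add emb_one)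

lemma E1emb: "2 * (emb a Egf * (emb a (fps_exp 1) - 1)) = fps_const a * fps_X * (emb a (fps_exp 1) + 1)"
proof -
  have "emb a (2 * (Egf * (fps_exp 1 - 1))) = emb a (fps_X * (fps_exp 1 + 1))" by (simp only: E1)
  then show ?thesis by (simp only: emb_mult emb_add emb_diff emb_one emb_X emb_two)
qed

lemma emb_zero_exp: "emb 0 (fps_exp 1) = 1"
  by (rule fps_ext) (simp add: fps_one_nth)

lemma emb_exp_minus1_nz: "a \<noteq> 0 \<Longrightarrow> emb a (fps_exp 1) - 1 \<noteq> 0"
proof
  assume "a \<noteq> 0" "emb a (fps_exp 1) - 1 = 0"
  then have "fps_nth (emb a (fps_exp 1) - 1) 1 = 0" by simp
  then show False using \<open>a \<noteq> 0\<close> by simp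
qed

lemma Egf_even: "odd n \<Longrightarrow> fps_nth Egf n = 0"
proof -
  assume "odd n"
  define em where "em = emb [:-1:] (fps_exp 1)"
  define ep where "ep = emb 1 (fps_exp 1)"
  have z: "[:-1:] + (1::real poly) = 0" by (simp add: one_pCons)
  have inv: "em * ep = 1" unfolding z em_def ep_def emb_exp_add[symmetric] by (simp add: emb_zero_exp)
  have h1: "2 * (emb [:-1:] Egf * (em - 1)) = fps_const [:-1:] * fps_X * (em + 1)"
    unfolding em_def by (rule E1emb)
  have h2: "2 * (emb 1 Egf * (ep - 1)) = fps_const 1 * fps_X * (ep + 1)"
    unfolding ep_def by (rule E1emb)
  have "2 * ((emb [:-1:] Egf - emb 1 Egf) * (ep - 1)) = 0"
  proof -
    have c0: "[:-1:] = -(1::real poly)" by (simp add: one_pCons)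
    have c: "fps_const [:-1:] = - (1::real poly fps)" unfolding c0 by (metis fps_const_neg fps_const_1_eq_1)
    show ?thesis using h1 h2 inv unfolding c fps_const_1_eq_1 by algebra
  qed
  moreover have "ep - 1 \<noteq> 0" unfolding ep_def by (rule emb_exp_minus1_nz) simp
  ultimately have "emb [:-1:] Egf = emb 1 Egf" by simp
  then have "fps_nth (emb [:-1:] Egf) n = fps_nth (emb 1 Egf) n" by simp
  then have "coeff (fps_nth (emb [:-1:] Egf) n) 0 = coeff (fps_nth (emb 1 Egf) n) 0" by simp
  then show ?thesis using \<open>odd n\<close> by (simp add: coeff_0_power)
qed

lemma main_fps:
  "4 * emb [:1,1:] Egf * (fps_const [:0,1:] * emb 1 Egf + emb [:0,1:] Egf)
   = 4 * fps_const [:1,1:] * emb 1 Egf * emb [:0,1:] Egf + fps_const ([:0,1:] * [:1,1:]) * fps_X^2"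
  (is "?L = ?R")
proof -
  define Y :: "real poly" where "Y = [:0,1:]"
  define S :: "real poly" where "S = [:1,1:]"
  have SY: "S = 1 + Y" unfolding S_def Y_def by (simp add: one_pCons)
  define e1 where "e1 = emb 1 (fps_exp 1)"
  define ey where "ey = emb Y (fps_exp 1)"
  define es where "es = emb S (fps_exp 1)"
  have ees: "es = e1 * ey" unfolding es_def e1_def ey_def SY by (rule emb_exp_add)
  have h1: "2 * (emb 1 Egf * (e1 - 1)) = fps_X * (e1 + 1)"
    unfolding e1_def using E1emb[of 1] by simp
  have h2: "2 * (emb Y Egf * (ey - 1)) = fps_const Y * fps_X * (ey + 1)"
    unfolding ey_def by (rule E1emb)
  have h3: "2 * (emb S Egf * (es - 1)) = fps_const S * fps_X * (es + 1)"
    unfolding es_def by (rule E1emb)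
  have cS: "fps_const S = 1 + fps_const Y" unfolding SY by (simp add: fps_const_add[symmetric])
  have cYS: "fps_const (Y*S) = fps_const Y * fps_const S" by (simp add: fps_const_mult)
  have "(4 * emb S Egf * (fps_const Y * emb 1 Egf + emb Y Egf)
   - (4 * fps_const S * emb 1 Egf * emb Y Egf + fps_const (Y * S) * fps_X^2)) * ((e1 - 1) * (ey - 1) * (es - 1)) = 0"
    using h1 h2 h3 ees unfolding cYS cS by algebra
  moreover have "e1 - 1 \<noteq> 0" unfolding e1_def by (rule emb_exp_minus1_nz) simp
  moreover have "ey - 1 \<noteq> 0" unfolding ey_def by (rule emb_exp_minus1_nz) (simp add: Y_def)
  moreover have "es - 1 \<noteq> 0" unfolding es_def by (rule emb_exp_minus1_nz) (simp add: S_def)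
  ultimately show ?thesis unfolding Y_def S_def by simp
qed

lemma coeff_S_pow: "coeff ([:1,1:]^j) m = real (j choose m)"
proof (cases "m \<le> j")
  case True then show ?thesis using coeff_linear_poly_power[of m j "1::real" 1] by simp
next
  case False
  have "degree ([:1::real,1:]^j) \<le> j" using degree_power_le[of "[:1::real,1:]" j] by simp
  then show ?thesis using False by (simp add: coeff_eq_0)
qed

lemma coeff_gen: "coeff (smult c ([:1,1:]^j) * smult d ([:0,1:]^k)) m
   = c * d * (if k \<le> m then real (j choose (m-k)) else 0)"
proof -
  have "smult c ([:1,1:]^j) * smult d ([:0,1:]^k) = monom (c*d) k * [:1,1:]^j"
    by (simp add: monom_altdef mult.commute)
  then show ?thesis by (simp add: coeff_monom_mult coeff_S_pow)
qed

abbreviation (input) ee :: "nat \<Rightarrow> real" where "ee j \<equiv> fps_nth Egf j"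

lemma coeff_eq:
  assumes "N \<noteq> 2"
  shows "(\<Sum>j=0..N. ee j * ee (N-j) * real (j choose r))
       + (\<Sum>j=0..N. ee j * ee (N-j) * (if N-j \<le> r+1 then real (j choose (r+1-(N-j))) else 0))
       = (\<Sum>j=0..N. ee j * ee (N-j) * (if N-j \<le> r+1 then real (1 choose (r+1-(N-j))) else 0))"
proof -
  define Y :: "real poly" where "Y = [:0,1:]"
  define S :: "real poly" where "S = [:1,1:]"
  have eq: "fps_const 4 * (emb S Egf * (fps_const Y * emb 1 Egf)) + fps_const 4 * (emb S Egf * emb Y Egf)
     = fps_const 4 * (fps_const S * (emb 1 Egf * emb Y Egf)) + fps_const (Y*S) * fps_X^2"
    using main_fps unfolding Y_def S_def numeral_fps_const[symmetric] by (simp add: algebra_simps)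
  have a: "coeff (fps_nth (emb S Egf * (fps_const Y * emb 1 Egf)) N) (r+1)
     = (\<Sum>j=0..N. ee j * ee (N-j) * real (j choose r))"
  proof -
    have "fps_nth (emb S Egf * (fps_const Y * emb 1 Egf)) N
       = (\<Sum>j=0..N. smult (ee j) ([:1,1:]^j) * smult (ee (N-j)) ([:0,1:]^1))"
    proof -
      have inner: "fps_nth (fps_const Y * emb 1 Egf) m = smult (ee m) ([:0,1:]^1)" for m
        by (simp add: Y_def)
      show ?thesis unfolding fps_mult_nth[of "emb S Egf" "fps_const Y * emb 1 Egf"] inner
        by (simp add: S_def)
    qed
    then show ?thesis by (simp only: coeff_sum coeff_gen; simp)
  qed
  have b: "coeff (fps_nth (emb S Egf * emb Y Egf) N) (r+1)
     = (\<Sum>j=0..N. ee j * ee (N-j) * (if N-j \<le> r+1 then real (j choose (r+1-(N-j))) else 0))"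
  proof -
    have "fps_nth (emb S Egf * emb Y Egf) N
       = (\<Sum>j=0..N. smult (ee j) ([:1,1:]^j) * smult (ee (N-j)) ([:0,1:]^(N-j)))"
      unfolding fps_mult_nth by (intro sum.cong refl) (simp add: S_def Y_def)
    then show ?thesis by (simp only: coeff_sum coeff_gen; simp)
  qed
  have c: "coeff (fps_nth (fps_const S * (emb 1 Egf * emb Y Egf)) N) (r+1)
     = (\<Sum>j=0..N. ee j * ee (N-j) * (if N-j \<le> r+1 then real (1 choose (r+1-(N-j))) else 0))"
  proof -
    have "fps_nth (fps_const S * (emb 1 Egf * emb Y Egf)) N
       = (\<Sum>j=0..N. smult (ee j) ([:1,1:]^1) * smult (ee (N-j)) ([:0,1:]^(N-j)))"
    proof -
      have "fps_nth (fps_const S * (emb 1 Egf * emb Y Egf)) N = S * fps_nth (emb 1 Egf * emb Y Egf) N"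
        by simp
      also have "\<dots> = S * (\<Sum>j=0..N. smult (ee j) (1^j) * smult (ee (N-j)) (Y^(N-j)))"
        by (simp only: fps_mult_nth emb_nth)
      also have "\<dots> = (\<Sum>j=0..N. smult (ee j) ([:1,1:]^1) * smult (ee (N-j)) ([:0,1:]^(N-j)))"
        unfolding sum_distrib_left by (intro sum.cong refl) (simp add: S_def Y_def mult_ac smult_add_right)
      finally show ?thesis .
    qed
    then show ?thesis by (simp only: coeff_sum coeff_gen; simp)
  qed
  have "coeff (fps_nth (fps_const 4 * (emb S Egf * (fps_const Y * emb 1 Egf)) + fps_const 4 * (emb S Egf * emb Y Egf)) N) (r+1)
      = coeff (fps_nth (fps_const 4 * (fps_const S * (emb 1 Egf * emb Y Egf)) + fps_const (Y*S) * fps_X^2) N) (r+1)"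
    by (simp only: eq)
  then have "4 * coeff (fps_nth (emb S Egf * (fps_const Y * emb 1 Egf)) N) (r+1)
     + 4 * coeff (fps_nth (emb S Egf * emb Y Egf) N) (r+1)
     = 4 * coeff (fps_nth (fps_const S * (emb 1 Egf * emb Y Egf)) N) (r+1)"
    using assms by (simp add: numeral_mult_conv_smult)
  then show ?thesis unfolding a b c by simp
qed

lemma sum_reflect: "(\<Sum>j=0..N. g j) = (\<Sum>j=0..N. g (N - j :: nat))"
  by (rule sum.reindex_bij_witness[of _ "\<lambda>j. N-j" "\<lambda>j. N-j"]) auto

lemma sum_even_split: "(\<Sum>j=0..2*(M::nat). h j) = (\<Sum>k=0..M. h (2*k)) + (\<Sum>k<M. h (2*k+1))"
proof (induction M)
  case 0 then show ?case by simp
next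
  case (Suc M)
  have "2 * Suc M = Suc (Suc (2*M))" by simp
  then show ?case using Suc by (simp add: sum.atLeast0_atMost_Suc add_ac)
qed

lemma ee_even: "even j \<Longrightarrow> ee j = beta j"
  by (cases "j = 1") (auto simp: Egf_def bgf_def beta_def fps_X_nth)

lemma transform:
  assumes "N = 2*M"
  shows "(\<Sum>j=0..N. ee j * ee (N-j) * \<psi> j) = (\<Sum>k=0..M. beta (2*k) * beta (N-2*k) * \<psi> (N-2*k))"
proof -
  have "(\<Sum>j=0..N. ee j * ee (N-j) * \<psi> j) = (\<Sum>j=0..N. ee (N-j) * ee j * \<psi> (N-j))"
    by (subst sum_reflect) (intro sum.cong refl, auto)
  also have "\<dots> = (\<Sum>k=0..M. ee (N-2*k) * ee (2*k) * \<psi> (N-2*k)) + (\<Sum>k<M. ee (N-(2*k+1)) * ee (2*k+1) * \<psi> (N-(2*k+1)))"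
    unfolding assms by (rule sum_even_split)
  also have "(\<Sum>k<M. ee (N-(2*k+1)) * ee (2*k+1) * \<psi> (N-(2*k+1))) = 0"
    by (simp add: Egf_even)
  also have "(\<Sum>k=0..M. ee (N-2*k) * ee (2*k) * \<psi> (N-2*k)) = (\<Sum>k=0..M. beta (2*k) * beta (N-2*k) * \<psi> (N-2*k))"
  proof (intro sum.cong refl)
    fix k assume "k \<in> {0..M}"
    then have "even (N - 2*k)" using assms by auto
    then show "ee (N-2*k) * ee (2*k) * \<psi> (N-2*k) = beta (2*k) * beta (N-2*k) * \<psi> (N-2*k)"
      by (simp add: ee_even)
  qed
  finally show ?thesis by simp
qed

lemma delta_sum:
  assumes "finite A" "kk \<in> A" "\<And>k. k \<in> A \<Longrightarrow> f k = (if k = kk then c else 0)"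
  shows "sum f A = c"
proof -
  have "sum f A = sum (\<lambda>k. if k = kk then c else 0) A" using assms(3) by (rule sum.cong[OF refl])
  also have "\<dots> = c" using assms(1,2) by simp
  finally show ?thesis .
qed

theorem mainTheorem8:
  fixes N i :: nat
  assumes "even N" and "N \<ge> 4" and "i \<le> N div 2 - 1"
  shows "(\<Sum>k = 0..N div 2 - 1 - i div 2. beta (2*k) * beta (N - 2*k) * real ((N - 2*k) choose i))
       + (\<Sum>l = 0..i div 2. beta (2*l) * beta (N - 2*l) * real ((N - 2*l) choose (i + 1 - 2*l))) = 0"
proof -
  define M where "M = N div 2"
  have NM: "N = 2*M" using assms(1) unfolding M_def by simp
  have iM: "i + 1 \<le> M" using assms(2,3) unfolding M_def by simp
  define b where "b k = beta (2*k) * beta (N - 2*k)" for k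
  have ce: "(\<Sum>j=0..N. ee j * ee (N-j) * real (j choose i))
       + (\<Sum>j=0..N. ee j * ee (N-j) * (if N-j \<le> i+1 then real (j choose (i+1-(N-j))) else 0))
       = (\<Sum>j=0..N. ee j * ee (N-j) * (if N-j \<le> i+1 then real (1 choose (i+1-(N-j))) else 0))"
    using assms(2) by (intro coeff_eq) simp
  have F: "(\<Sum>k=0..M. b k * real ((N-2*k) choose i))
     + (\<Sum>k=0..M. b k * (if 2*k \<le> i+1 then real ((N-2*k) choose (i+1-2*k)) else 0))
     = (\<Sum>k=0..M. b k * (if 2*k \<le> i+1 then real (1 choose (i+1-2*k)) else 0))"
  proof -
    have t2: "(\<Sum>k=0..M. beta (2*k) * beta (N-2*k) * (if N-(N-2*k) \<le> i+1 then real ((N-2*k) choose (i+1-(N-(N-2*k)))) else 0))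
       = (\<Sum>k=0..M. b k * (if 2*k \<le> i+1 then real ((N-2*k) choose (i+1-2*k)) else 0))"
      by (intro sum.cong refl) (auto simp: b_def NM)
    have t3: "(\<Sum>k=0..M. beta (2*k) * beta (N-2*k) * (if N-(N-2*k) \<le> i+1 then real (1 choose (i+1-(N-(N-2*k)))) else 0))
       = (\<Sum>k=0..M. b k * (if 2*k \<le> i+1 then real (1 choose (i+1-2*k)) else 0))"
      by (intro sum.cong refl) (auto simp: b_def NM)
    show ?thesis using ce unfolding transform[OF NM] t2 t3 by (simp add: b_def)
  qed
  define K where "K = M - 1 - i div 2"
  have F1: "(\<Sum>k=0..M. b k * real ((N-2*k) choose i))
     = (\<Sum>k=0..K. b k * real ((N-2*k) choose i)) + (if even i then b (K+1) else 0)"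
  proof -
    have "{0..M} = {0..K} \<union> {Suc K..M}" using iM unfolding K_def by auto
    then have "(\<Sum>k=0..M. b k * real ((N-2*k) choose i))
      = (\<Sum>k=0..K. b k * real ((N-2*k) choose i)) + (\<Sum>k=Suc K..M. b k * real ((N-2*k) choose i))"
      by (simp add: sum.union_disjoint)
    moreover have "(\<Sum>k=Suc K..M. b k * real ((N-2*k) choose i)) = (if even i then b (K+1) else 0)"
    proof (rule delta_sum[where kk = "K+1"])
      show "K + 1 \<in> {Suc K..M}" using iM unfolding K_def by auto
      fix k assume k: "k \<in> {Suc K..M}"
      show "b k * real ((N-2*k) choose i) = (if k = K+1 then (if even i then b (K+1) else 0) else 0)"
      proof (cases "k = K+1")
        case True
        then have "N - 2*k = 2*(i div 2)" using iM NM unfolding K_def by auto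
        then show ?thesis using True by (auto elim: oddE)
      next
        case False
        then have "N - 2*k < i" using k iM NM unfolding K_def by auto
        then show ?thesis using False by simp
      qed
    qed simp
    ultimately show ?thesis by simp
  qed
  have F2: "(\<Sum>k=0..M. b k * (if 2*k \<le> i+1 then real ((N-2*k) choose (i+1-2*k)) else 0))
     = (\<Sum>l=0..i div 2. b l * real ((N-2*l) choose (i+1-2*l))) + (if odd i then b (i div 2 + 1) else 0)"
  proof -
    have "{0..M} = {0..i div 2} \<union> {Suc (i div 2)..M}" using iM by auto
    then have "(\<Sum>k=0..M. b k * (if 2*k \<le> i+1 then real ((N-2*k) choose (i+1-2*k)) else 0))
      = (\<Sum>k=0..i div 2. b k * (if 2*k \<le> i+1 then real ((N-2*k) choose (i+1-2*k)) else 0))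
        + (\<Sum>k=Suc (i div 2)..M. b k * (if 2*k \<le> i+1 then real ((N-2*k) choose (i+1-2*k)) else 0))"
      by (simp add: sum.union_disjoint)
    moreover have "(\<Sum>k=0..i div 2. b k * (if 2*k \<le> i+1 then real ((N-2*k) choose (i+1-2*k)) else 0))
       = (\<Sum>l=0..i div 2. b l * real ((N-2*l) choose (i+1-2*l)))"
      by (intro sum.cong refl) auto
    moreover have "(\<Sum>k=Suc (i div 2)..M. b k * (if 2*k \<le> i+1 then real ((N-2*k) choose (i+1-2*k)) else 0))
       = (if odd i then b (i div 2 + 1) else 0)"
    proof (rule delta_sum[where kk = "i div 2 + 1"])
      show "i div 2 + 1 \<in> {Suc (i div 2)..M}" using iM by auto
      fix k assume k: "k \<in> {Suc (i div 2)..M}"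
      show "b k * (if 2*k \<le> i+1 then real ((N-2*k) choose (i+1-2*k)) else 0)
          = (if k = i div 2 + 1 then (if odd i then b (i div 2 + 1) else 0) else 0)"
      proof (cases "k = i div 2 + 1")
        case True
        then show ?thesis by (auto elim: oddE)
      next
        case False
        then have "2*k > i+1" using k by auto
        then show ?thesis using False by simp
      qed
    qed simp
    ultimately show ?thesis by simp
  qed
  have F3: "(\<Sum>k=0..M. b k * (if 2*k \<le> i+1 then real (1 choose (i+1-2*k)) else 0)) = b ((i+1) div 2)"
  proof (rule delta_sum[where kk = "(i+1) div 2"])
    show "(i+1) div 2 \<in> {0..M}" using iM by auto
    fix k assume k: "k \<in> {0..M}"
    show "b k * (if 2*k \<le> i+1 then real (1 choose (i+1-2*k)) else 0) = (if k = (i+1) div 2 then b ((i+1) div 2) else 0)"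
    proof (cases "k = (i+1) div 2")
      case True
      then have "i + 1 - 2*k \<le> 1" "2*k \<le> i+1" by auto
      then show ?thesis using True by (auto simp: le_Suc_eq)
    next
      case False
      then have "2*k > i+1 \<or> i+1-2*k \<ge> 2" by auto
      then show ?thesis using False by auto
    qed
  qed simp
  have sym: "even i \<Longrightarrow> b (K+1) = b ((i+1) div 2)"
  proof -
    assume "even i"
    then have "2*(K+1) = N - i" "2*((i+1) div 2) = i" using iM NM unfolding K_def by (auto elim: evenE)
    moreover have "N - (N - i) = i" using iM NM by auto
    ultimately show ?thesis unfolding b_def by simp
  qed
  have odd1: "odd i \<Longrightarrow> i div 2 + 1 = (i+1) div 2" by (auto elim: oddE)
  have "(\<Sum>k = 0..K. b k * real ((N - 2*k) choose i))
       + (\<Sum>l = 0..i div 2. b l * real ((N - 2*l) choose (i + 1 - 2*l))) = 0"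
    using F F1 F2 F3 sym odd1 by (cases "even i") auto
  then show ?thesis unfolding b_def K_def M_def by simp
qed

end
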